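(* Let $\{x_k\}$ be generated by the Subgradient-InexP method with the exogenous stepsize rule, under the standing assumptions, and let $\rho:=\nu+2\mu$ where $\nu=\frac{1+2\bar\gamma}{1-2\bar\lambda}$. Then for every $x\in C$ and every $k=0,1,\dots$, $$\|x_{k+1}-x\|^2\le\|x_k-x\|^2+\rho\alpha_k^2-2\frac{\alpha_k}{\eta_k}\big[f(x_k)-f(x)\big].$$
   Context: Problem: minimize a convex $f:\mathbb{R}^n\to\mathbb{R}$ over a nonempty closed convex $C\subset\mathbb{R}^n$. For $\epsilon\ge0$, $\partial_\epsilon f(x):=\{s: f(y)\ge f(x)+\langle s,y-x\rangle-\epsilon\ \forall y\}$. Relative error tolerance function: any $\varphi_{\gamma,\theta,\lambda}:(\mathbb{R}^n)^3\to[0,\infty)$ with $\varphi_{\gamma,\theta,\lambda}(u,v,w)\le\gamma\|v-u\|^2+\theta\|w-v\|^2+\lambda\|w-u\|^2$; for $u\in C$, $\mathcal{P}_C(\varphi_{\gamma,\theta,\lambda},u,v):=\{w\in C:\langle v-w,z-w\rangle\le\varphi_{\gamma,\theta,\lambda}(u,v,w)\ \forall z\in C\}$. Subgradient-InexP method: $x_0\in C$; at iteration $k$, if $0\in\partial f(x_k)$ stop; otherwise choose nonzero $s_k\in\partial_{\epsilon_k}f(x_k)$, stepsize $t_k>0$, and $x_{k+1}\in\mathcal{P}_C(\varphi_{\gamma_k,\theta_k,\lambda_k},x_k,x_k-t_ks_k)$. Standing assumptions: $\gamma_k\in[0,\bar\gamma)$, $\theta_k\in[0,\bar\theta)$, $\lambda_k\in[0,\bar\lambda)$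 with $\bar\gamma\ge0$, $\bar\theta,\bar\lambda\in[0,1/2)$; the sequence is infinite. Exogenous stepsize rule: $\mu\ge0$; $\{\alpha_k\}$, $\{\epsilon_k\}$ nonnegative, $\{\epsilon_k\}$ nonincreasing, $\sum_k\alpha_k=+\infty$, $\sum_k\alpha_k^2<+\infty$, $\epsilon_k\le\mu\alpha_k$ for all $k$; $t_k:=\alpha_k/\eta_k$ with $\eta_k:=\max\{1,\|s_k\|\}$. *)

theory Defs
  imports "HOL-Analysis.Analysis"
begin

definition eps_subdiff :: "('a::real_inner \<Rightarrow> real) \<Rightarrow> real \<Rightarrow> 'a \<Rightarrow> 'a set" where
  "eps_subdiff f eps x = {s. \<forall>y. f y \<ge> f x + inner s (y - x) - eps}"

definition rel_err_tol :: "real \<Rightarrow> real \<Rightarrow> real \<Rightarrow> ('a::real_normed_vector \<Rightarrow> 'a \<Rightarrow> 'a \<Rightarrow> real) \<Rightarrow> bool" where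
  "rel_err_tol gam th lam phi \<longleftrightarrow>
     (\<forall>u v w. 0 \<le> phi u v w \<and>
        phi u v w \<le> gam * (norm (v - u))\<^sup>2 + th * (norm (w - v))\<^sup>2 + lam * (norm (w - u))\<^sup>2)"

definition inexact_proj :: "'a::real_inner set \<Rightarrow> ('a \<Rightarrow> 'a \<Rightarrow> 'a \<Rightarrow> real) \<Rightarrow> 'a \<Rightarrow> 'a \<Rightarrow> 'a set" where
  "inexact_proj C phi u v = {w \<in> C. \<forall>z\<in>C. inner (v - w) (z - w) \<le> phi u v w}"

end

theory Submission imports Defs "HOL-Analysis.Analysis" begin
lemma geom:
  fixes a d y :: "'a::real_inner"
  assumes h1: "inner (d - a) (y - a) \<le> g*(norm d)\<^sup>2 + th*(norm (a-d))\<^sup>2 + l*(norm a)\<^sup>2"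
    and h2: "inner (d - a) (0 - a) \<le> g*(norm d)\<^sup>2 + th*(norm (a-d))\<^sup>2 + l*(norm a)\<^sup>2"
    and g: "0 \<le> g" "g \<le> G" and l: "0 \<le> l" "l \<le> L" "L < 1/2" and th: "0 \<le> th" "th < 1/2"
  shows "(norm a)\<^sup>2 + 2 * inner (d - a) y \<le> (1+2*G)/(1-2*L) * (norm d)\<^sup>2"
proof -
  define A where "A = (norm a)\<^sup>2"
  define D where "D = (norm d)\<^sup>2"
  define P where "P = inner d a"
  define E where "E = (norm (a-d))\<^sup>2"
  define Q where "Q = inner (d-a) y"
  have E: "E = A - 2*P + D" unfolding E_def A_def D_def P_def
    by (simp add: power2_norm_eq_inner inner_diff_left inner_diff_right inner_commute)
  have E0: "E \<ge> 0" unfolding E_def by simp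
  have D0: "D \<ge> 0" unfolding D_def by simp
  have A0: "A \<ge> 0" unfolding A_def by simp
  have h1': "Q - P + A \<le> g*D + th*E + l*A"
    using h1 unfolding Q_def P_def A_def D_def E_def
    by (simp add: inner_diff_left inner_diff_right power2_norm_eq_inner inner_commute algebra_simps)
  have h2': "A - P \<le> g*D + th*E + l*A"
    using h2 unfolding P_def A_def D_def E_def
    by (simp add: inner_diff_left inner_diff_right power2_norm_eq_inner inner_commute algebra_simps)
  have "th*E \<le> (1/2)*E" using th E0 by (intro mult_right_mono) auto
  hence "(1-2*l)*A \<le> (1+2*g)*D" using h2' E by (simp add: algebra_simps)
  also have "\<dots> \<le> (1+2*G)*D" using g D0 by (intro mult_right_mono) auto
  finally have "(1-2*l)*A \<le> (1+2*G)*D" .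
  moreover have "(1-2*L)*A \<le> (1-2*l)*A" using l A0 by (intro mult_right_mono) auto
  ultimately have "(1-2*L)*A \<le> (1+2*G)*D" by linarith
  hence AB: "A \<le> (1+2*G)/(1-2*L)*D" using l by (simp add: field_simps)
  have "l*A \<le> L*A" using l A0 by (intro mult_right_mono) auto
  also have "\<dots> \<le> L*((1+2*G)/(1-2*L)*D)" using AB l by (intro mult_left_mono) auto
  finally have lA: "l*A \<le> L*((1+2*G)/(1-2*L)*D)" .
  have gD: "g*D \<le> G*D" using g D0 by (intro mult_right_mono) auto
  define N where "N = L*((1+2*G)/(1-2*L)*D)"
  have thE: "th*E \<le> (1/2)*E" by fact
  have "A + 2*Q \<le> (1+2*G)*D + 2*N"
    using h1' E lA[folded N_def] gD thE by (simp add: ring_distribs)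
  also have "\<dots> = (1+2*G)/(1-2*L)*D" using l unfolding N_def by (simp add: field_simps)
  finally show ?thesis unfolding A_def Q_def D_def .
qed

theorem mainTheorem3:
  fixes f :: "'a::euclidean_space \<Rightarrow> real"
    and C :: "'a set"
    and xs s :: "nat \<Rightarrow> 'a"
    and eps alpha t gam th lam :: "nat \<Rightarrow> real"
    and phi :: "nat \<Rightarrow> 'a \<Rightarrow> 'a \<Rightarrow> 'a \<Rightarrow> real"
    and gbar thbar lbar mu :: real
  assumes f_convex: "convex_on UNIV f"
    and C_closed: "closed C" and C_convex: "convex C" and C_nonempty: "C \<noteq> {}"
    and x0: "xs 0 \<in> C"
    and not_opt: "\<And>k. 0 \<notin> eps_subdiff f 0 (xs k)"
    and s_nz: "\<And>k. s k \<noteq> 0"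
    and s_sub: "\<And>k. s k \<in> eps_subdiff f (eps k) (xs k)"
    and t_def: "\<And>k. t k = alpha k / max 1 (norm (s k))"
    and phi_tol: "\<And>k. rel_err_tol (gam k) (th k) (lam k) (phi k)"
    and step: "\<And>k. xs (Suc k) \<in> inexact_proj C (phi k) (xs k) (xs k - t k *\<^sub>R s k)"
    and gam_rng: "\<And>k. 0 \<le> gam k \<and> gam k < gbar"
    and th_rng: "\<And>k. 0 \<le> th k \<and> th k < thbar"
    and lam_rng: "\<And>k. 0 \<le> lam k \<and> lam k < lbar"
    and gbar_nn: "0 \<le> gbar"
    and thbar_rng: "0 \<le> thbar \<and> thbar < 1/2"
    and lbar_rng: "0 \<le> lbar \<and> lbar < 1/2"
    and mu_nn: "0 \<le> mu"
    and alpha_nn: "\<And>k. 0 \<le> alpha k"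
    and eps_nn: "\<And>k. 0 \<le> eps k"
    and eps_noninc: "decseq eps"
    and alpha_div: "filterlim (\<lambda>n. \<Sum>k<n. alpha k) at_top sequentially"
    and alpha_sq: "summable (\<lambda>k. (alpha k)\<^sup>2)"
    and eps_le: "\<And>k. eps k \<le> mu * alpha k"
  shows "\<forall>x\<in>C. \<forall>k.
           (norm (xs (Suc k) - x))\<^sup>2 \<le> (norm (xs k - x))\<^sup>2
             + ((1 + 2 * gbar) / (1 - 2 * lbar) + 2 * mu) * (alpha k)\<^sup>2
             - 2 * (alpha k / max 1 (norm (s k))) * (f (xs k) - f x)"
proof (intro ballI allI)
  fix x k assume xC: "x \<in> C"
  define u where "u = xs k"
  define w where "w = xs (Suc k)"
  define T where "T = t k"
  define v where "v = u - T *\<^sub>R s k"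
  define a where "a = w - u"
  define d where "d = v - u"
  define y where "y = x - u"
  define \<nu> where "\<nu> = (1 + 2 * gbar) / (1 - 2 * lbar)"
  have uC: "u \<in> C"
  proof (cases k)
    case 0 thus ?thesis using x0 u_def by simp
  next
    case (Suc j) thus ?thesis using step[of j] u_def by (simp add: inexact_proj_def)
  qed
  have wI: "w \<in> inexact_proj C (phi k) u v" unfolding w_def v_def u_def T_def by (rule step)
  hence wC: "w \<in> C" and wP: "\<forall>z\<in>C. inner (v - w) (z - w) \<le> phi k u v w"
    unfolding inexact_proj_def by blast+
  have phib: "phi k u v w \<le> gam k * (norm d)\<^sup>2 + th k * (norm (a - d))\<^sup>2 + lam k * (norm a)\<^sup>2"
  proof -
    have "phi k u v w \<le> gam k * (norm (v - u))\<^sup>2 + th k * (norm (w - v))\<^sup>2 + lam k * (norm (w - u))\<^sup>2"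
      using phi_tol[of k] unfolding rel_err_tol_def by blast
    moreover have "w - v = a - d" "v - u = d" "w - u = a" unfolding a_def d_def by simp_all
    ultimately show ?thesis by simp
  qed
  have h1: "inner (d - a) (y - a) \<le> gam k * (norm d)\<^sup>2 + th k * (norm (a - d))\<^sup>2 + lam k * (norm a)\<^sup>2"
  proof -
    have "v - w = d - a" "x - w = y - a" unfolding a_def d_def y_def by auto
    moreover have "inner (v - w) (x - w) \<le> phi k u v w" using wP xC by blast
    ultimately show ?thesis using phib by simp
  qed
  have h2: "inner (d - a) (0 - a) \<le> gam k * (norm d)\<^sup>2 + th k * (norm (a - d))\<^sup>2 + lam k * (norm a)\<^sup>2"
  proof -
    have "v - w = d - a" "u - w = 0 - a" unfolding a_def d_def y_def by auto
    moreover have "inner (v - w) (u - w) \<le> phi k u v w" using wP uC by blast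
    ultimately show ?thesis using phib by simp
  qed
  have G: "(norm a)\<^sup>2 + 2 * inner (d - a) y \<le> \<nu> * (norm d)\<^sup>2"
    unfolding \<nu>_def
    by (rule geom[OF h1 h2]) (use gam_rng[of k] lam_rng[of k] th_rng[of k] thbar_rng lbar_rng in auto)
  have ident: "(norm (w - x))\<^sup>2 = (norm y)\<^sup>2 - 2 * inner d y + ((norm a)\<^sup>2 + 2 * inner (d - a) y)"
  proof -
    have "w - x = a - y" unfolding a_def y_def by simp
    hence "(norm (w - x))\<^sup>2 = (norm a)\<^sup>2 - 2 * inner a y + (norm y)\<^sup>2"
      by (simp add: power2_norm_eq_inner inner_diff_left inner_diff_right inner_commute)
    moreover have "inner (d - a) y = inner d y - inner a y" by (simp add: inner_diff_left)
    ultimately show ?thesis by linarith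
  qed
  have Teq: "T = alpha k / max 1 (norm (s k))" unfolding T_def by (rule t_def)
  have M: "max 1 (norm (s k)) \<ge> 1" by simp
  have T0: "T \<ge> 0" unfolding T_def t_def using alpha_nn[of k] M by simp
  have Tle: "T \<le> alpha k" unfolding T_def t_def using alpha_nn[of k] M
    by (simp add: divide_le_eq mult_le_cancel_left1 mult_left_mono)
  have Ts: "T * norm (s k) \<le> alpha k"
  proof -
    have "T * norm (s k) = alpha k * (norm (s k) / max 1 (norm (s k)))" unfolding T_def t_def by simp
    also have "\<dots> \<le> alpha k * 1" using alpha_nn[of k] M
      by (intro mult_left_mono) (auto simp: divide_le_eq)
    finally show ?thesis by simp
  qed
  have dn: "(norm d)\<^sup>2 \<le> (alpha k)\<^sup>2"
  proof -
    have "norm d = T * norm (s k)" unfolding d_def v_def using T0 by simp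
    thus ?thesis using Ts T0 by (simp add: power_mono)
  qed
  have sub: "f x \<ge> f u + inner (s k) (x - u) - eps k"
    using s_sub[of k] unfolding eps_subdiff_def u_def by blast
  have dy: "- 2 * inner d y = 2 * T * inner (s k) (x - u)" unfolding d_def v_def y_def by simp
  have "2 * T * inner (s k) (x - u) \<le> 2 * T * (f x - f u + eps k)"
    using sub T0 by (intro mult_left_mono) auto
  also have "\<dots> = - 2 * T * (f u - f x) + 2 * T * eps k" by (simp add: algebra_simps)
  finally have A1: "- 2 * inner d y \<le> - 2 * T * (f u - f x) + 2 * T * eps k" using dy by simp
  have "T * eps k \<le> alpha k * (mu * alpha k)"
    using T0 Tle eps_nn[of k] eps_le[of k] by (intro mult_mono) auto
  hence A2: "2 * T * eps k \<le> 2 * mu * (alpha k)\<^sup>2" by (simp add: power2_eq_square algebra_simps)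
  have nu0: "\<nu> \<ge> 0" unfolding \<nu>_def using gbar_nn lbar_rng by simp
  have A3: "\<nu> * (norm d)\<^sup>2 \<le> \<nu> * (alpha k)\<^sup>2" using nu0 dn by (intro mult_left_mono)
  have ny: "(norm y)\<^sup>2 = (norm (u - x))\<^sup>2" unfolding y_def by (simp add: norm_minus_commute)
  have "(\<nu> + 2 * mu) * (alpha k)\<^sup>2 = \<nu> * (alpha k)\<^sup>2 + 2 * mu * (alpha k)\<^sup>2" by (simp add: ring_distribs)
  hence fin: "(norm (w - x))\<^sup>2 \<le> (norm (u - x))\<^sup>2 + (\<nu> + 2 * mu) * (alpha k)\<^sup>2 - 2 * T * (f u - f x)"
    using ident G A1 A2 A3 ny by linarith
  show "(norm (xs (Suc k) - x))\<^sup>2 \<le> (norm (xs k - x))\<^sup>2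
             + ((1 + 2 * gbar) / (1 - 2 * lbar) + 2 * mu) * (alpha k)\<^sup>2
             - 2 * (alpha k / max 1 (norm (s k))) * (f (xs k) - f x)"
    using fin unfolding w_def u_def Teq \<nu>_def .
qed
end
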